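(* Let $G$ be a group generated by a finite symmetric set $X$ and hyperbolic relative to a finite collection of subgroups $\{H_\lambda\}_{\lambda\in\Lambda}$; let $\mathcal H=\bigsqcup_\lambda(H_\lambda\setminus\{1\})$ and $\Gamma=\Gamma(G,X\cup\mathcal H)$. Let $L>0$ be a constant such that for every cycle $q$ in $\Gamma$, every $\lambda\in\Lambda$ and every set of isolated $H_\lambda$-components $p_1,\dots,p_k$ of $q$, one has $\sum_{i=1}^k d_X((p_i)_-,(p_i)_+)\le L\,l(q)$. Let $s\ge 0$ and let $\epsilon\ge 0$ be a constant such that: whenever $p_1,p_2$ are geodesics in $\Gamma$ with $\max\{d_X((p_1)_-,(p_2)_-),d_X((p_1)_+,(p_2)_+)\}\le s$ and $c$ is a component of $p_1$ with $d_X(c_-,c_+)\ge\epsilon$, there is a component of $p_2$ connected to $c$. Now let $p_1=q_1e_1$ and $p_2=q_2e_2$ be geodesics in $\Gamma$ (with $e_1,e_2$ their last edges) such that $\max\{d_X((p_1)_-,(p_2)_-),d_X((p_1)_+,(p_2)_+)\}\le s$, and suppose that for some $\lambda\in\Lambda$, $e_1$ and $e_2$ are $H_\lambda$-components of $p_1$ and $p_2$ respectively with $d_X((e_i)_-,(e_i)_+)\ge\max\{\epsilon,2L(s+1)\}$ for $i=1,2$. Then $e_1$ and $e_2$ are connected.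
   Context: Relative hyperbolicity: with $F=(\ast_\lambda H_\lambda)\ast F(X)$ and $\varepsilon:F\to G$ the natural map, $G$ is hyperbolic relative to $\{H_\lambda\}$ if $\ker\varepsilon$ is the normal closure of a finite set $\mathcal R$ and there is $C>0$ such that every word $W$ over $X\cup\mathcal H$ representing $1$ in $G$ can be written in $F$ as a product of at most $C\|W\|$ conjugates of elements of $\mathcal R^{\pm1}$. The Cayley graph $\Gamma(G,\mathcal A)$ has vertex set $G$ and an edge labelled $a$ from $g$ to $ga$ for each $g\in G$, $a\in\mathcal A$; paths have origin $p_-$, terminus $p_+$, length $l(p)$ (number of edges). $d_X$ and $d_{X\cup\mathcal H}$ denote the word metrics for $X$ and $X\cup\mathcal H$. For a path $q$ in $\Gamma$, a subpath $p$ is an $H_\lambda$-component of $q$ if its label is a word in $H_\lambda\setminus\{1\}$ and $p$ is not contained in a longer subpath of $q$ with this property. Two components $p_1,p_2$ (of the same or different paths) are connected if they are $H_\lambda$-components for the same $\lambda$ and all their vertices lie in a common left coset $gH_\lambda$. An $H_\lambda$-component of $q$ is isolated if no other $H_\lambda$-component of $q$ is connected to it. *)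

theory Defs
  imports Complex_Main "HOL-Algebra.Coset" "HOL-Algebra.Generated_Groups"
begin

text \<open>Letters of F: Inl (x, True) is the free generator x in X, Inl (x, False) its inverse;
  Inr (l, h) is the element h of H_l minus 1 (the l-th factor, tagged by l).\<close>

definition validF :: "('a,'b) monoid_scheme \<Rightarrow> 'a set \<Rightarrow> 'l set \<Rightarrow> ('l \<Rightarrow> 'a set)
    \<Rightarrow> ('a \<times> bool) + ('l \<times> 'a) \<Rightarrow> bool" where
  "validF G X Lam H a = (case a of Inl (x, b) \<Rightarrow> x \<in> X
                         | Inr (l, h) \<Rightarrow> l \<in> Lam \<and> h \<in> H l \<and> h \<noteq> \<one>\<^bsub>G\<^esub>)"

definition evF :: "('a,'b) monoid_scheme \<Rightarrow> ('a \<times> bool) + ('l \<times> 'a) \<Rightarrow> 'a" where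
  "evF G a = (case a of Inl (x, b) \<Rightarrow> (if b then x else inv\<^bsub>G\<^esub> x) | Inr (l, h) \<Rightarrow> h)"

text \<open>The natural map epsilon: F \<rightarrow> G on words.\<close>
definition evFw :: "('a,'b) monoid_scheme \<Rightarrow> (('a \<times> bool) + ('l \<times> 'a)) list \<Rightarrow> 'a" where
  "evFw G w = foldr (\<lambda>a r. evF G a \<otimes>\<^bsub>G\<^esub> r) w \<one>\<^bsub>G\<^esub>"

definition invF :: "('a,'b) monoid_scheme \<Rightarrow> ('a \<times> bool) + ('l \<times> 'a) \<Rightarrow> ('a \<times> bool) + ('l \<times> 'a)" where
  "invF G a = (case a of Inl (x, b) \<Rightarrow> Inl (x, \<not> b) | Inr (l, h) \<Rightarrow> Inr (l, inv\<^bsub>G\<^esub> h))"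

definition invFw :: "('a,'b) monoid_scheme \<Rightarrow> (('a \<times> bool) + ('l \<times> 'a)) list
    \<Rightarrow> (('a \<times> bool) + ('l \<times> 'a)) list" where
  "invFw G w = rev (map (invF G) w)"

text \<open>Elementary reductions of words in the free product; equality in F is the equivalence
  closure of these (normal form theorem for free products).\<close>
definition F_step :: "('a,'b) monoid_scheme \<Rightarrow> (('a \<times> bool) + ('l \<times> 'a)) list
    \<Rightarrow> (('a \<times> bool) + ('l \<times> 'a)) list \<Rightarrow> bool" where
  "F_step G u v =
     ((\<exists>a b x e. u = a @ [Inl (x, e), Inl (x, \<not> e)] @ b \<and> v = a @ b) \<or>
      (\<exists>a b l h h'. u = a @ [Inr (l, h), Inr (l, h')] @ b \<and>
          v = a @ (if h \<otimes>\<^bsub>G\<^esub> h' = \<one>\<^bsub>G\<^esub> then [] else [Inr (l, h \<otimes>\<^bsub>G\<^esub> h')]) @ b))"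

definition F_eq :: "('a,'b) monoid_scheme \<Rightarrow> (('a \<times> bool) + ('l \<times> 'a)) list
    \<Rightarrow> (('a \<times> bool) + ('l \<times> 'a)) list \<Rightarrow> bool" where
  "F_eq G = equivclp (F_step G)"

text \<open>Relative hyperbolicity (Osin): ker epsilon is the normal closure of a finite set R,
  and the relative Dehn function is linear.\<close>
definition rel_hyperbolic :: "('a,'b) monoid_scheme \<Rightarrow> 'a set \<Rightarrow> 'l set \<Rightarrow> ('l \<Rightarrow> 'a set) \<Rightarrow> bool" where
  "rel_hyperbolic G X Lam H =
     (\<exists>R :: (('a \<times> bool) + ('l \<times> 'a)) list set.
        finite R \<and>
        (\<forall>r\<in>R. (\<forall>a\<in>set r. validF G X Lam H a) \<and> evFw G r = \<one>\<^bsub>G\<^esub>) \<and>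
        (\<exists>C::real. C > 0 \<and>
          (\<forall>W. (\<forall>a\<in>set W. validF G X Lam H a) \<and> evFw G W = \<one>\<^bsub>G\<^esub> \<longrightarrow>
             (\<exists>cs :: ((('a \<times> bool) + ('l \<times> 'a)) list \<times> (('a \<times> bool) + ('l \<times> 'a)) list \<times> bool) list.
                real (length cs) \<le> C * real (length W) \<and>
                (\<forall>(u, r, e)\<in>set cs. (\<forall>a\<in>set u. validF G X Lam H a) \<and> r \<in> R) \<and>
                F_eq G W (concat (map (\<lambda>(u, r, e). u @ (if e then r else invFw G r) @ invFw G u) cs))))))"

text \<open>Edge labels: Inl x for x in X, Inr (l, h) for h in H_l minus 1 (disjoint union).
  A path is given by its origin g and its label w.\<close>

definition validC :: "('a,'b) monoid_scheme \<Rightarrow> 'a set \<Rightarrow> 'l set \<Rightarrow> ('l \<Rightarrow> 'a set)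
    \<Rightarrow> 'a + ('l \<times> 'a) \<Rightarrow> bool" where
  "validC G X Lam H a = (case a of Inl x \<Rightarrow> x \<in> X
                         | Inr (l, h) \<Rightarrow> l \<in> Lam \<and> h \<in> H l \<and> h \<noteq> \<one>\<^bsub>G\<^esub>)"

definition evC :: "'a + ('l \<times> 'a) \<Rightarrow> 'a" where
  "evC a = (case a of Inl x \<Rightarrow> x | Inr (l, h) \<Rightarrow> h)"

definition evCw :: "('a,'b) monoid_scheme \<Rightarrow> ('a + ('l \<times> 'a)) list \<Rightarrow> 'a" where
  "evCw G w = foldr (\<lambda>a r. evC a \<otimes>\<^bsub>G\<^esub> r) w \<one>\<^bsub>G\<^esub>"

definition is_path :: "('a,'b) monoid_scheme \<Rightarrow> 'a set \<Rightarrow> 'l set \<Rightarrow> ('l \<Rightarrow> 'a set)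
    \<Rightarrow> 'a \<Rightarrow> ('a + ('l \<times> 'a)) list \<Rightarrow> bool" where
  "is_path G X Lam H g w = (g \<in> carrier G \<and> (\<forall>a\<in>set w. validC G X Lam H a))"

text \<open>The k-th vertex of the path (g, w); vertex 0 is p_-, vertex (length w) is p_+.\<close>
definition vert :: "('a,'b) monoid_scheme \<Rightarrow> 'a \<Rightarrow> ('a + ('l \<times> 'a)) list \<Rightarrow> nat \<Rightarrow> 'a" where
  "vert G g w k = g \<otimes>\<^bsub>G\<^esub> evCw G (take k w)"

definition dX :: "('a,'b) monoid_scheme \<Rightarrow> 'a set \<Rightarrow> 'a \<Rightarrow> 'a \<Rightarrow> nat" where
  "dX G X g h = (LEAST n. \<exists>w. set w \<subseteq> X \<and> length w = n \<and> g \<otimes>\<^bsub>G\<^esub> foldr (\<otimes>\<^bsub>G\<^esub>) w \<one>\<^bsub>G\<^esub> = h)"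

definition dXH :: "('a,'b) monoid_scheme \<Rightarrow> 'a set \<Rightarrow> 'l set \<Rightarrow> ('l \<Rightarrow> 'a set) \<Rightarrow> 'a \<Rightarrow> 'a \<Rightarrow> nat" where
  "dXH G X Lam H g h = (LEAST n. \<exists>w. (\<forall>a\<in>set w. validC G X Lam H a) \<and> length w = n \<and> g \<otimes>\<^bsub>G\<^esub> evCw G w = h)"

definition is_geodesic :: "('a,'b) monoid_scheme \<Rightarrow> 'a set \<Rightarrow> 'l set \<Rightarrow> ('l \<Rightarrow> 'a set)
    \<Rightarrow> 'a \<Rightarrow> ('a + ('l \<times> 'a)) list \<Rightarrow> bool" where
  "is_geodesic G X Lam H g w =
     (is_path G X Lam H g w \<and> length w = dXH G X Lam H g (vert G g w (length w)))"

definition is_cycle :: "('a,'b) monoid_scheme \<Rightarrow> 'a set \<Rightarrow> 'l set \<Rightarrow> ('l \<Rightarrow> 'a set)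
    \<Rightarrow> 'a \<Rightarrow> ('a + ('l \<times> 'a)) list \<Rightarrow> bool" where
  "is_cycle G X Lam H g w = (is_path G X Lam H g w \<and> vert G g w (length w) = g)"

definition isH :: "'l \<Rightarrow> 'a + ('l \<times> 'a) \<Rightarrow> bool" where
  "isH l a = (\<exists>h. a = Inr (l, h))"

definition Hsub :: "'l \<Rightarrow> ('a + ('l \<times> 'a)) list \<Rightarrow> nat \<Rightarrow> nat \<Rightarrow> bool" where
  "Hsub l w i j = (i < j \<and> j \<le> length w \<and> (\<forall>k. i \<le> k \<and> k < j \<longrightarrow> isH l (w ! k)))"

definition component :: "'l \<Rightarrow> ('a + ('l \<times> 'a)) list \<Rightarrow> nat \<Rightarrow> nat \<Rightarrow> bool" where
  "component l w i j = (Hsub l w i j \<and>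
     \<not> (\<exists>i' j'. i' \<le> i \<and> j \<le> j' \<and> (i', j') \<noteq> (i, j) \<and> Hsub l w i' j'))"

definition comp_verts :: "('a,'b) monoid_scheme \<Rightarrow> 'a \<Rightarrow> ('a + ('l \<times> 'a)) list \<Rightarrow> nat \<Rightarrow> nat \<Rightarrow> 'a set" where
  "comp_verts G g w i j = {vert G g w k | k. i \<le> k \<and> k \<le> j}"

definition connected_comps :: "('a,'b) monoid_scheme \<Rightarrow> ('l \<Rightarrow> 'a set)
    \<Rightarrow> 'l \<Rightarrow> 'a \<Rightarrow> ('a + ('l \<times> 'a)) list \<Rightarrow> nat \<Rightarrow> nat
    \<Rightarrow> 'l \<Rightarrow> 'a \<Rightarrow> ('a + ('l \<times> 'a)) list \<Rightarrow> nat \<Rightarrow> nat \<Rightarrow> bool" where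
  "connected_comps G H l1 g1 w1 i1 j1 l2 g2 w2 i2 j2 =
     (component l1 w1 i1 j1 \<and> component l2 w2 i2 j2 \<and> l1 = l2 \<and>
      (\<exists>x\<in>carrier G. comp_verts G g1 w1 i1 j1 \<subseteq> x <#\<^bsub>G\<^esub> H l1 \<and>
                     comp_verts G g2 w2 i2 j2 \<subseteq> x <#\<^bsub>G\<^esub> H l1))"

definition isolated :: "('a,'b) monoid_scheme \<Rightarrow> ('l \<Rightarrow> 'a set)
    \<Rightarrow> 'l \<Rightarrow> 'a \<Rightarrow> ('a + ('l \<times> 'a)) list \<Rightarrow> nat \<Rightarrow> nat \<Rightarrow> bool" where
  "isolated G H l g w i j = (component l w i j \<and>
     \<not> (\<exists>i' j'. (i', j') \<noteq> (i, j) \<and> component l w i' j' \<and>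
                connected_comps G H l g w i j l g w i' j'))"

end

theory Submission
  imports Defs
begin


lemma evCw_Nil[simp]: "evCw G [] = \<one>\<^bsub>G\<^esub>" by (simp add: evCw_def)
lemma evCw_Cons[simp]: "evCw G (a # w) = evC a \<otimes>\<^bsub>G\<^esub> evCw G w" by (simp add: evCw_def)

lemma evCw_carrier: "group G \<Longrightarrow> \<forall>a\<in>set w. evC a \<in> carrier G \<Longrightarrow> evCw G w \<in> carrier G"
  by (induction w) (auto intro: group.is_monoid monoid.m_closed monoid.one_closed)

lemma evCw_append: "group G \<Longrightarrow> \<forall>a\<in>set u. evC a \<in> carrier G \<Longrightarrow> \<forall>a\<in>set v. evC a \<in> carrier G \<Longrightarrow>
   evCw G (u @ v) = evCw G u \<otimes>\<^bsub>G\<^esub> evCw G v"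
proof (induction u)
  case Nil then show ?case by (simp add: evCw_carrier group.is_monoid monoid.l_one)
next
  case (Cons a u)
  then show ?case using evCw_carrier[of G u] evCw_carrier[of G v]
    by (simp add: group.is_monoid monoid.m_assoc)
qed

lemma foldr_mult_carrier: "group G \<Longrightarrow> set xs \<subseteq> carrier G \<Longrightarrow> foldr (\<otimes>\<^bsub>G\<^esub>) xs \<one>\<^bsub>G\<^esub> \<in> carrier G"
  by (induction xs) (auto intro: group.is_monoid monoid.m_closed monoid.one_closed)

lemma foldr_mult_append: "group G \<Longrightarrow> set xs \<subseteq> carrier G \<Longrightarrow> set ys \<subseteq> carrier G \<Longrightarrow>
   foldr (\<otimes>\<^bsub>G\<^esub>) (xs @ ys) \<one>\<^bsub>G\<^esub> = foldr (\<otimes>\<^bsub>G\<^esub>) xs \<one>\<^bsub>G\<^esub> \<otimes>\<^bsub>G\<^esub> foldr (\<otimes>\<^bsub>G\<^esub>) ys \<one>\<^bsub>G\<^esub>"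
proof (induction xs)
  case Nil then show ?case by (simp add: foldr_mult_carrier group.is_monoid monoid.l_one)
next
  case (Cons a u)
  then show ?case using foldr_mult_carrier[of G u] foldr_mult_carrier[of G ys]
    by (simp add: group.is_monoid monoid.m_assoc)
qed

lemma gen_word: assumes grp: "group G" and Xs: "X \<subseteq> carrier G" and sym: "\<forall>x\<in>X. inv\<^bsub>G\<^esub> x \<in> X"
  and h: "h \<in> generate G X"
  shows "\<exists>xs. set xs \<subseteq> X \<and> foldr (\<otimes>\<^bsub>G\<^esub>) xs \<one>\<^bsub>G\<^esub> = h"
  using h
proof (induction rule: generate.induct)
  case one then show ?case by (intro exI[of _ "[]"]) auto
next
  case (incl h) then show ?case using grp Xs
    by (intro exI[of _ "[h]"]) (auto simp: group.is_monoid monoid.r_one subsetD)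
next
  case (inv h) then show ?case using grp Xs sym
    by (intro exI[of _ "[inv\<^bsub>G\<^esub> h]"]) (auto simp: group.is_monoid monoid.r_one subsetD)
next
  case (eng h1 h2)
  then obtain xs ys where "set xs \<subseteq> X" "foldr (\<otimes>\<^bsub>G\<^esub>) xs \<one>\<^bsub>G\<^esub> = h1"
     "set ys \<subseteq> X" "foldr (\<otimes>\<^bsub>G\<^esub>) ys \<one>\<^bsub>G\<^esub> = h2" by blast
  then show ?case using foldr_mult_append[OF grp, of xs ys] Xs
    by (intro exI[of _ "xs @ ys"]) auto
qed

lemma dX_word: assumes grp: "group G" and Xs: "X \<subseteq> carrier G" and sym: "\<forall>x\<in>X. inv\<^bsub>G\<^esub> x \<in> X"
  and gen: "generate G X = carrier G" and y: "y \<in> carrier G" and z: "z \<in> carrier G"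
  shows "\<exists>xs. set xs \<subseteq> X \<and> length xs = dX G X y z \<and> y \<otimes>\<^bsub>G\<^esub> foldr (\<otimes>\<^bsub>G\<^esub>) xs \<one>\<^bsub>G\<^esub> = z"
proof -
  interpret group G by fact
  have "inv\<^bsub>G\<^esub> y \<otimes>\<^bsub>G\<^esub> z \<in> generate G X" using gen y z by simp
  then obtain xs where xs: "set xs \<subseteq> X" "foldr (\<otimes>\<^bsub>G\<^esub>) xs \<one>\<^bsub>G\<^esub> = inv\<^bsub>G\<^esub> y \<otimes>\<^bsub>G\<^esub> z"
    using gen_word[OF grp Xs sym] by blast
  have "y \<otimes>\<^bsub>G\<^esub> foldr (\<otimes>\<^bsub>G\<^esub>) xs \<one>\<^bsub>G\<^esub> = z" using xs y z by (simp add: m_assoc[symmetric])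
  then have ex: "\<exists>n. \<exists>w. set w \<subseteq> X \<and> length w = n \<and> y \<otimes>\<^bsub>G\<^esub> foldr (\<otimes>\<^bsub>G\<^esub>) w \<one>\<^bsub>G\<^esub> = z" using xs by blast
  show ?thesis unfolding dX_def by (rule LeastI_ex[OF ex])
qed

lemma dX_zero: assumes grp: "group G" and Xs: "X \<subseteq> carrier G" and sym: "\<forall>x\<in>X. inv\<^bsub>G\<^esub> x \<in> X"
  and gen: "generate G X = carrier G" and y: "y \<in> carrier G" and z: "z \<in> carrier G"
  and d: "dX G X y z = 0" shows "y = z"
proof -
  interpret group G by fact
  from dX_word[OF grp Xs sym gen y z] d show ?thesis using y by auto
qed



context group begin

lemma validC_carrier: "X \<subseteq> carrier G \<Longrightarrow> \<forall>l\<in>Lam. subgroup (H l) G \<Longrightarrow> validC G X Lam H a \<Longrightarrow> evC a \<in> carrier G"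
  by (auto simp: validC_def evC_def split: sum.splits prod.splits dest: subgroup.subset)

lemma vert_carrier: "g \<in> carrier G \<Longrightarrow> \<forall>a\<in>set w. evC a \<in> carrier G \<Longrightarrow> vert G g w k \<in> carrier G"
  unfolding vert_def by (intro m_closed evCw_carrier[OF is_group]) (auto dest: in_set_takeD)

lemma vert_app1: "g \<in> carrier G \<Longrightarrow> \<forall>a\<in>set (u@v). evC a \<in> carrier G \<Longrightarrow> t \<le> length u \<Longrightarrow>
   vert G g (u @ v) t = vert G g u t"
  by (simp add: vert_def)

lemma vert_app2: "g \<in> carrier G \<Longrightarrow> \<forall>a\<in>set (u@v). evC a \<in> carrier G \<Longrightarrow>
   vert G g (u @ v) (length u + t) = vert G (g \<otimes> evCw G u) v t"
proof -
  assume g: "g \<in> carrier G" and c: "\<forall>a\<in>set (u@v). evC a \<in> carrier G"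
  have c2: "\<forall>a\<in>set (take t v). evC a \<in> carrier G" using c by (auto dest: in_set_takeD)
  show ?thesis
  unfolding vert_def using c c2 g evCw_carrier[OF is_group, of u] evCw_carrier[OF is_group, of "take t v"]
  by (simp add: evCw_append[OF is_group] m_assoc)
qed

lemma vert_app2': "g \<in> carrier G \<Longrightarrow> \<forall>a\<in>set (u@v). evC a \<in> carrier G \<Longrightarrow> length u \<le> i \<Longrightarrow>
   vert G g (u @ v) i = vert G (vert G g u (length u)) v (i - length u)"
  using vert_app2[of g u v "i - length u"] by (simp add: vert_def)

lemma vert_Suc: "g \<in> carrier G \<Longrightarrow> \<forall>a\<in>set w. evC a \<in> carrier G \<Longrightarrow> k < length w \<Longrightarrow>
   vert G g w (Suc k) = vert G g w k \<otimes> evC (w ! k)"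
proof -
  assume g: "g \<in> carrier G" and c: "\<forall>a\<in>set w. evC a \<in> carrier G" and k: "k < length w"
  have c2: "\<forall>a\<in>set (take k w). evC a \<in> carrier G" using c by (auto dest: in_set_takeD)
  have c3: "evC (w ! k) \<in> carrier G" using c k by auto
  show ?thesis
  unfolding vert_def using c2 c3 g k evCw_carrier[OF is_group, of "take k w"]
  by (simp add: take_Suc_conv_app_nth evCw_append[OF is_group] m_assoc)
qed

lemma vert_0[simp]: "g \<in> carrier G \<Longrightarrow> vert G g w 0 = g" by (simp add: vert_def)

lemma vert_full: "vert G g w (length w) = g \<otimes> evCw G w" by (simp add: vert_def)

lemma evCw_Inl: "evCw G (map Inl ys) = foldr (\<otimes>) ys \<one>"
  by (induction ys) (auto simp: evC_def)

lemma dXH_le: "\<forall>a\<in>set u. validC G X Lam H a \<Longrightarrow> g \<otimes> evCw G u = h \<Longrightarrow> dXH G X Lam H g h \<le> length u"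
  unfolding dXH_def by (rule Least_le) blast

lemma geo_seg:
  assumes Xs: "X \<subseteq> carrier G" and sg: "\<forall>l\<in>Lam. subgroup (H l) G"
    and geo: "is_geodesic G X Lam H g w" and ij: "i \<le> j" "j \<le> length w"
    and u: "\<forall>a\<in>set u. validC G X Lam H a" and uu: "vert G g w i \<otimes> evCw G u = vert G g w j"
  shows "j - i \<le> length u"
proof -
  have g: "g \<in> carrier G" and wv: "\<forall>a\<in>set w. validC G X Lam H a"
    and len: "length w = dXH G X Lam H g (vert G g w (length w))"
    using geo by (auto simp: is_geodesic_def is_path_def)
  have wc: "\<forall>a\<in>set w. evC a \<in> carrier G" and uc: "\<forall>a\<in>set u. evC a \<in> carrier G"
    using wv u validC_carrier[OF Xs sg] by blast+
  define w' where "w' = take i w @ u @ drop j w"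
  have tc: "\<forall>a\<in>set (take i w). evC a \<in> carrier G" "\<forall>a\<in>set (drop j w). evC a \<in> carrier G"
    "\<forall>a\<in>set (take j w). evC a \<in> carrier G"
    using wc by (auto dest: in_set_takeD in_set_dropD)
  have e1: "evCw G (take i w) \<in> carrier G" "evCw G u \<in> carrier G" "evCw G (drop j w) \<in> carrier G"
    "evCw G (take j w) \<in> carrier G"
    using tc uc evCw_carrier[OF is_group] by blast+
  have e2: "evCw G w' = evCw G (take i w) \<otimes> (evCw G u \<otimes> evCw G (drop j w))"
    unfolding w'_def
    apply (subst evCw_append[OF is_group, of "take i w" "u @ drop j w"])
      apply (use tc uc in auto)[2]
    apply (subst evCw_append[OF is_group, of u "drop j w"])
    using tc uc by auto
  have "g \<otimes> evCw G w' = (g \<otimes> evCw G (take i w) \<otimes> evCw G u) \<otimes> evCw G (drop j w)"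
    using e1 e2 g by (simp add: m_assoc)
  also have "\<dots> = g \<otimes> evCw G (take j w) \<otimes> evCw G (drop j w)" using uu by (simp add: vert_def)
  also have "\<dots> = g \<otimes> evCw G w" using tc g evCw_carrier[OF is_group, of "take j w"]
      evCw_carrier[OF is_group, of "drop j w"]
    by (simp add: m_assoc evCw_append[OF is_group, symmetric])
  finally have "dXH G X Lam H g (vert G g w (length w)) \<le> length w'"
    using wv u by (intro dXH_le) (auto simp: w'_def vert_full dest: in_set_takeD in_set_dropD)
  then show ?thesis using len ij by (simp add: w'_def)
qed

lemma geo_coset:
  assumes Xs: "X \<subseteq> carrier G" and sg: "\<forall>l\<in>Lam. subgroup (H l) G" and l: "l \<in> Lam"
    and geo: "is_geodesic G X Lam H g w" and ij: "i + 2 \<le> j" "j \<le> length w"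
    and c: "inv (vert G g w i) \<otimes> vert G g w j \<in> H l"
  shows False
proof -
  have g: "g \<in> carrier G" and wv: "\<forall>a\<in>set w. validC G X Lam H a"
    using geo by (auto simp: is_geodesic_def is_path_def)
  have wc: "\<forall>a\<in>set w. evC a \<in> carrier G"
    using wv validC_carrier[OF Xs sg] by blast
  have vi: "vert G g w i \<in> carrier G" and vj: "vert G g w j \<in> carrier G"
    using vert_carrier[OF g wc] by auto
  define h where "h = inv (vert G g w i) \<otimes> vert G g w j"
  define u where "u = (if h = \<one> then [] else [(Inr (l, h) :: 'a + _)])"
  have "\<forall>a\<in>set u. validC G X Lam H a" using c l by (auto simp: u_def h_def validC_def)
  moreover have "vert G g w i \<otimes> evCw G u = vert G g w j"
    using vi vj by (auto simp: u_def h_def evC_def m_assoc[symmetric]) (metis m_assoc r_inv r_one inv_closed l_one)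
  ultimately have "j - i \<le> length u" using geo_seg[OF Xs sg geo _ ij(2)] ij by auto
  then show False using ij by (auto simp: u_def split: if_splits)
qed

lemma coset_rel: "subgroup K G \<Longrightarrow> x \<in> carrier G \<Longrightarrow> y \<in> x <# K \<Longrightarrow> z \<in> x <# K \<Longrightarrow> inv y \<otimes> z \<in> K"
  unfolding l_coset_def
proof clarsimp
  fix h1 h2 assume K: "subgroup K G" and x: "x \<in> carrier G" and h: "h1 \<in> K" "h2 \<in> K"
  have c: "h1 \<in> carrier G" "h2 \<in> carrier G" using K h subgroup.subset by auto
  have "inv (x \<otimes> h1) \<otimes> (x \<otimes> h2) = inv h1 \<otimes> h2"
    using x c by (simp add: inv_mult_group m_assoc[symmetric]) (simp add: m_assoc)
  then show "inv (x \<otimes> h1) \<otimes> (x \<otimes> h2) \<in> K" using K h by (simp add: subgroup.m_closed subgroup.m_inv_closed)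
qed

lemma rel_trans: "subgroup K G \<Longrightarrow> y \<in> carrier G \<Longrightarrow> z \<in> carrier G \<Longrightarrow> t \<in> carrier G \<Longrightarrow>
  inv y \<otimes> z \<in> K \<Longrightarrow> inv y \<otimes> t \<in> K \<Longrightarrow> inv z \<otimes> t \<in> K"
proof -
  assume K: "subgroup K G" and c: "y \<in> carrier G" "z \<in> carrier G" "t \<in> carrier G"
    and a: "inv y \<otimes> z \<in> K" "inv y \<otimes> t \<in> K"
  have "inv (inv y \<otimes> z) \<otimes> (inv y \<otimes> t) = inv z \<otimes> t"
    using c by (simp add: inv_mult_group m_assoc[symmetric]) (simp add: m_assoc)
  then show ?thesis using K a by (metis subgroup.m_closed subgroup.m_inv_closed)
qed

lemma rel_sym: "subgroup K G \<Longrightarrow> y \<in> carrier G \<Longrightarrow> z \<in> carrier G \<Longrightarrow> inv y \<otimes> z \<in> K \<Longrightarrow> inv z \<otimes> y \<in> K"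
  by (metis inv_inv inv_mult_group inv_closed subgroup.m_inv_closed)

lemma rel_comp: "subgroup K G \<Longrightarrow> y \<in> carrier G \<Longrightarrow> z \<in> carrier G \<Longrightarrow> t \<in> carrier G \<Longrightarrow>
  inv y \<otimes> z \<in> K \<Longrightarrow> inv z \<otimes> t \<in> K \<Longrightarrow> inv y \<otimes> t \<in> K"
proof -
  assume K: "subgroup K G" and c: "y \<in> carrier G" "z \<in> carrier G" "t \<in> carrier G"
    and a: "inv y \<otimes> z \<in> K" "inv z \<otimes> t \<in> K"
  have "(inv y \<otimes> z) \<otimes> (inv z \<otimes> t) = inv y \<otimes> t"
    using c by (simp add: m_assoc[symmetric]) (simp add: m_assoc)
  then show ?thesis using K a by (metis subgroup.m_closed)
qed

lemma rel_refl: "subgroup K G \<Longrightarrow> y \<in> carrier G \<Longrightarrow> inv y \<otimes> y \<in> K"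
  by (simp add: subgroup.one_closed)

lemma rel_in_coset: "subgroup K G \<Longrightarrow> y \<in> carrier G \<Longrightarrow> z \<in> carrier G \<Longrightarrow> inv y \<otimes> z \<in> K \<Longrightarrow> z \<in> y <# K"
  unfolding l_coset_def by (auto intro!: bexI[of _ "inv y \<otimes> z"] simp: m_assoc[symmetric])

lemma Hsub_at: "Hsub l w i j \<Longrightarrow> i \<le> m \<Longrightarrow> m < j \<Longrightarrow> isH l (w ! m)"
  by (simp add: Hsub_def)

lemma comp_same_start: "component l w i j \<Longrightarrow> component l w i j' \<Longrightarrow> j = j'"
  unfolding component_def Hsub_def by (metis linorder_neqE_nat order_refl order_less_imp_le prod.inject)

lemma foldr_inv_rev: "set xs \<subseteq> carrier G \<Longrightarrow> foldr (\<otimes>) (map (\<lambda>x. inv x) (rev xs)) \<one> = inv (foldr (\<otimes>) xs \<one>)"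
proof (induction xs)
  case Nil then show ?case by simp
next
  case (Cons a xs)
  have "foldr (\<otimes>) (map (\<lambda>x. inv x) (rev xs) @ [inv a]) \<one> = foldr (\<otimes>) (map (\<lambda>x. inv x) (rev xs)) \<one> \<otimes> inv a"
    using Cons.prems by (subst foldr_mult_append[OF is_group]) auto
  then show ?case using Cons foldr_mult_carrier[OF is_group, of xs] by (simp add: inv_mult_group)
qed

end


context group begin

lemma main:
  assumes Xs: "X \<subseteq> carrier G" and sym: "\<forall>x\<in>X. inv x \<in> X" and gen: "generate G X = carrier G"
    and sg: "\<forall>l\<in>Lam. subgroup (H l) G"
    and L_pos: "L > 0"
    and L_prop: "\<forall>g w l' S. is_cycle G X Lam H g w \<and> l' \<in> Lam \<and>
                   S \<subseteq> {(i, j). isolated G H l' g w i j} \<longrightarrow>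
                   (\<Sum>(i, j)\<in>S. real (dX G X (vert G g w i) (vert G g w j))) \<le> L * real (length w)"
    and s_nonneg: "s \<ge> 0"
    and eps_prop: "\<forall>h1 w1 h2 w2 l' i j.
                   is_geodesic G X Lam H h1 w1 \<and> is_geodesic G X Lam H h2 w2 \<and>
                   real (dX G X (vert G h1 w1 0) (vert G h2 w2 0)) \<le> s \<and>
                   real (dX G X (vert G h1 w1 (length w1)) (vert G h2 w2 (length w2))) \<le> s \<and>
                   component l' w1 i j \<and> real (dX G X (vert G h1 w1 i) (vert G h1 w1 j)) \<ge> eps \<longrightarrow>
                   (\<exists>l'' i' j'. connected_comps G H l' h1 w1 i j l'' h2 w2 i' j')"
    and geo1: "is_geodesic G X Lam H g1 (q1 @ [e1])"
    and geo2: "is_geodesic G X Lam H g2 (q2 @ [e2])"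
    and start_close: "real (dX G X (vert G g1 (q1 @ [e1]) 0) (vert G g2 (q2 @ [e2]) 0)) \<le> s"
    and end_close: "real (dX G X (vert G g1 (q1 @ [e1]) (Suc (length q1)))
                                 (vert G g2 (q2 @ [e2]) (Suc (length q2)))) \<le> s"
    and l_in: "l \<in> Lam"
    and comp1: "component l (q1 @ [e1]) (length q1) (Suc (length q1))"
    and comp2: "component l (q2 @ [e2]) (length q2) (Suc (length q2))"
    and big1: "real (dX G X (vert G g1 (q1 @ [e1]) (length q1)) (vert G g1 (q1 @ [e1]) (Suc (length q1))))
                 \<ge> max eps (2 * L * (s + 1))"
    and big2: "real (dX G X (vert G g2 (q2 @ [e2]) (length q2)) (vert G g2 (q2 @ [e2]) (Suc (length q2))))
                 \<ge> max eps (2 * L * (s + 1))"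
  shows "connected_comps G H l g1 (q1 @ [e1]) (length q1) (Suc (length q1))
                         l g2 (q2 @ [e2]) (length q2) (Suc (length q2))"
proof -
  define W1 where "W1 = q1 @ [e1]"
  define W2 where "W2 = q2 @ [e2]"
  define n1 where "n1 = length q1"
  define n2 where "n2 = length q2"
  have Hl: "subgroup (H l) G" using sg l_in by blast
  have Hc: "\<And>y. y \<in> H l \<Longrightarrow> y \<in> carrier G" using Hl subgroup.subset by blast
  have g1: "g1 \<in> carrier G" and W1v: "\<forall>a\<in>set W1. validC G X Lam H a"
    using geo1 by (auto simp: W1_def is_geodesic_def is_path_def)
  have g2: "g2 \<in> carrier G" and W2v: "\<forall>a\<in>set W2. validC G X Lam H a"
    using geo2 by (auto simp: W2_def is_geodesic_def is_path_def)
  have W1c: "\<forall>a\<in>set W1. evC a \<in> carrier G" using W1v validC_carrier[OF Xs sg] by blast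
  have W2c: "\<forall>a\<in>set W2. evC a \<in> carrier G" using W2v validC_carrier[OF Xs sg] by blast
  have q2c: "\<forall>a\<in>set q2. evC a \<in> carrier G" using W2c by (simp add: W2_def)
  define P1 where "P1 = vert G g1 W1 (Suc n1)"
  define A1 where "A1 = vert G g1 W1 n1"
  define P2 where "P2 = vert G g2 W2 (Suc n2)"
  define B where "B = vert G g2 W2 n2"
  have cP1: "P1 \<in> carrier G" and cA1: "A1 \<in> carrier G" and cP2: "P2 \<in> carrier G" and cB: "B \<in> carrier G"
    using vert_carrier[OF g1 W1c] vert_carrier[OF g2 W2c] by (auto simp: P1_def A1_def P2_def B_def)
  have "isH l e1" using comp1 by (auto simp: component_def Hsub_def)
  then obtain h1 where e1: "e1 = Inr (l, h1)" by (auto simp: isH_def)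
  have "isH l e2" using comp2 by (auto simp: component_def Hsub_def)
  then obtain h2 where e2: "e2 = Inr (l, h2)" by (auto simp: isH_def)
  have h1H: "h1 \<in> H l" "h1 \<noteq> \<one>" using W1v by (auto simp: W1_def e1 validC_def)
  have h2H: "h2 \<in> H l" "h2 \<noteq> \<one>" using W2v by (auto simp: W2_def e2 validC_def)
  have P1eq: "P1 = A1 \<otimes> h1" using vert_Suc[OF g1 W1c, of n1]
    by (simp add: P1_def A1_def W1_def n1_def e1 evC_def)
  have P2eq: "P2 = B \<otimes> h2" using vert_Suc[OF g2 W2c, of n2]
    by (simp add: P2_def B_def W2_def n2_def e2 evC_def)
  have RA1: "inv P1 \<otimes> A1 \<in> H l"
  proof -
    have "inv P1 \<otimes> A1 = inv h1" using cA1 Hc[OF h1H(1)]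
      by (simp add: P1eq inv_mult_group m_assoc)
    then show ?thesis using h1H Hl by (simp add: subgroup.m_inv_closed)
  qed
  have RB: "inv P2 \<otimes> B \<in> H l"
  proof -
    have "inv P2 \<otimes> B = inv h2" using cB Hc[OF h2H(1)]
      by (simp add: P2eq inv_mult_group m_assoc)
    then show ?thesis using h2H Hl by (simp add: subgroup.m_inv_closed)
  qed
  have cv1: "comp_verts G g1 W1 n1 (Suc n1) = {A1, P1}"
    by (auto simp: comp_verts_def A1_def P1_def le_Suc_eq intro: exI[of _ n1] exI[of _ "Suc n1"])
  have cv2: "comp_verts G g2 W2 n2 (Suc n2) = {B, P2}"
    by (auto simp: comp_verts_def B_def P2_def le_Suc_eq intro: exI[of _ n2] exI[of _ "Suc n2"])
  have direct: ?thesis if r: "inv P1 \<otimes> P2 \<in> H l"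
  proof -
    have "A1 \<in> P1 <# H l" "P1 \<in> P1 <# H l" "P2 \<in> P1 <# H l" "B \<in> P1 <# H l"
      using rel_in_coset[OF Hl] RA1 rel_refl[OF Hl] r rel_comp[OF Hl cP1 cP2 cB r RB] cP1 cA1 cP2 cB
      by auto
    then show ?thesis using comp1 comp2 cP1
      unfolding connected_comps_def cv1[unfolded W1_def n1_def] cv2[unfolded W2_def n2_def]
      by blast
  qed
  show ?thesis
  proof (cases "inv P1 \<otimes> P2 \<in> H l")
    case True then show ?thesis by (rule direct)
  next
    case nr: False
    have "max eps (2 * L * (s + 1)) \<ge> eps" by simp
    then have "\<exists>l'' i' j'. connected_comps G H l g1 W1 n1 (Suc n1) l'' g2 W2 i' j'"
      using eps_prop[rule_format, of g1 W1 g2 W2 l n1 "Suc n1"] geo1 geo2 start_close end_close comp1 big1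
      by (auto simp: W1_def W2_def n1_def n2_def)
    then obtain l'' i' j' where cc0: "connected_comps G H l g1 W1 n1 (Suc n1) l'' g2 W2 i' j'" by blast
    then obtain x where cc: "component l W2 i' j'" and x: "x \<in> carrier G"
      and xs1: "comp_verts G g1 W1 n1 (Suc n1) \<subseteq> x <# H l"
      and xs2: "comp_verts G g2 W2 i' j' \<subseteq> x <# H l"
      unfolding connected_comps_def by blast
    have P1x: "P1 \<in> x <# H l" using xs1 cv1 by auto
    have cP: "inv P1 \<otimes> vert G g2 W2 m \<in> H l" if "i' \<le> m" "m \<le> j'" for m
      using coset_rel[OF Hl x P1x, of "vert G g2 W2 m"] xs2 that by (auto simp: comp_verts_def)
    have ij: "i' < j'" "j' \<le> Suc n2" using cc by (auto simp: component_def Hsub_def W2_def n2_def)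
    have jn: "j' \<le> n2"
    proof (rule ccontr)
      assume "\<not> j' \<le> n2"
      then have "j' = Suc n2" using ij by simp
      then show False using cP[of j'] ij nr by (simp add: P2_def)
    qed
    define a where "a = vert G g2 W2 j'"
    have ca: "a \<in> carrier G" using vert_carrier[OF g2 W2c] by (simp add: a_def)
    have Ra: "inv P1 \<otimes> a \<in> H l" using cP[of j'] ij by (simp add: a_def)
    obtain xs where xsX: "set xs \<subseteq> X" and xslen: "length xs = dX G X P1 P2"
      and xsP: "P1 \<otimes> foldr (\<otimes>) xs \<one> = P2"
      using dX_word[OF is_group Xs sym gen cP1 cP2] by blast
    define k where "k = length xs"
    have xsc: "set xs \<subseteq> carrier G" using xsX Xs by blast
    have fxc: "foldr (\<otimes>) xs \<one> \<in> carrier G" using foldr_mult_carrier[OF is_group xsc] .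
    define ys where "ys = map (\<lambda>x. inv x) (rev xs)"
    have ysX: "set ys \<subseteq> X" using xsX sym by (auto simp: ys_def)
    have ysP: "P2 \<otimes> foldr (\<otimes>) ys \<one> = P1"
      using foldr_inv_rev[OF xsc] xsP[symmetric] cP1 fxc by (simp add: ys_def m_assoc)
    have ylen: "length ys = k" by (simp add: ys_def k_def)
    have kpos: "k \<ge> 1"
    proof (rule ccontr)
      assume "\<not> k \<ge> 1" then have "xs = []" by (cases xs) (auto simp: k_def)
      then have "P1 = P2" using xsP cP1 by simp
      then show False using nr rel_refl[OF Hl cP1] by simp
    qed
    have ks: "real k \<le> s" using end_close xslen
      by (simp add: k_def P1_def P2_def W1_def W2_def n1_def n2_def)
    define seg where "seg = drop j' q2"
    have segc: "\<forall>a\<in>set seg. evC a \<in> carrier G" using q2c by (auto simp: seg_def dest: in_set_dropD)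
    have seglen: "length seg = n2 - j'" by (simp add: seg_def n2_def)
    have W2q2: "vert G g2 W2 m = vert G g2 q2 m" if "m \<le> n2" for m
      using vert_app1[OF g2, of q2 "[e2]" m] W2c that by (simp add: W2_def n2_def)
    have aq: "a = vert G g2 q2 j'" using W2q2 jn by (simp add: a_def)
    have segv: "vert G a seg t = vert G g2 W2 (j' + t)" if "t \<le> n2 - j'" for t
    proof -
      have "vert G g2 q2 (j' + t) = vert G g2 (take j' q2 @ drop j' q2) (length (take j' q2) + t)"
        using jn by (simp add: n2_def)
      also have "\<dots> = vert G (g2 \<otimes> evCw G (take j' q2)) seg t"
        using vert_app2[OF g2, of "take j' q2" "drop j' q2" t] q2c by (simp add: seg_def)
      also have "g2 \<otimes> evCw G (take j' q2) = a" by (simp add: aq vert_def)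
      finally show ?thesis using W2q2[of "j'+t"] that jn by simp
    qed
    have segB: "a \<otimes> evCw G seg = B"
      using segv[of "n2 - j'"] vert_full[of a seg] seglen jn by (simp add: B_def)
    define hh where "hh = inv P1 \<otimes> a"
    have hhH: "hh \<in> H l" using Ra by (simp add: hh_def)
    have chh: "hh \<in> carrier G" using Hc hhH by blast
    have P1hh: "P1 \<otimes> hh = a" using cP1 ca by (simp add: hh_def m_assoc[symmetric])
    have ahh: "a \<otimes> inv hh = P1" using cP1 ca by (simp add: hh_def inv_mult_group m_assoc[symmetric])
    have ihh: "inv hh \<in> H l" "inv hh \<noteq> \<one> \<longleftrightarrow> hh \<noteq> \<one>"
      using hhH Hl chh by (auto simp: subgroup.m_inv_closed)
    define f where "f = (if hh = \<one> then 0 else 1::nat)"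
    define fp where "fp = (if hh = \<one> then [] else [(Inr (l, hh) :: 'a + _)])"
    have fplen: "length fp = f" by (simp add: fp_def f_def)
    have fpv: "\<forall>a\<in>set fp. validC G X Lam H a" using hhH l_in by (auto simp: fp_def validC_def)
    have fpc: "\<forall>a\<in>set fp. evC a \<in> carrier G" using fpv validC_carrier[OF Xs sg] by blast
    have evfp: "P1 \<otimes> evCw G fp = a" using P1hh cP1 chh by (auto simp: fp_def evC_def)
    define u where "u = (if hh = \<one> then [] else [(Inr (l, inv hh) :: 'a + _)]) @ map Inl xs"
    have uv: "\<forall>a\<in>set u. validC G X Lam H a" using ihh l_in xsX by (auto simp: u_def validC_def)
    have "vert G g2 W2 j' \<otimes> evCw G u = vert G g2 W2 (Suc n2)"
    proof -
      have "evCw G u = evCw G (if hh = \<one> then [] else [(Inr (l, inv hh) :: 'a + _)]) \<otimes> foldr (\<otimes>) xs \<one>"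
        unfolding u_def using xsc chh
        by (subst evCw_append[OF is_group]) (auto simp: evC_def evCw_Inl)
      then show ?thesis using ahh xsP ca chh fxc
        by (auto simp: a_def[symmetric] P2_def[symmetric] evC_def m_assoc[symmetric] hh_def)
    qed
    then have "Suc n2 - j' \<le> length u"
      using geo_seg[OF Xs sg geo2[folded W2_def] _ _ uv] ij by (simp add: W2_def n2_def)
    then have ulen: "Suc n2 - j' \<le> f + k" by (simp add: u_def f_def k_def split: if_splits)
    define w where "w = e2 # map Inl ys @ fp @ seg"
    have wlen: "length w = Suc k + f + (n2 - j')" by (simp add: w_def ylen fplen seglen)
    have wle: "length w \<le> 2 * k + 2 * f" using wlen ulen jn by simp
    have wv: "\<forall>a\<in>set w. validC G X Lam H a"
      using W2v fpv ysX by (auto simp: w_def W2_def seg_def validC_def dest: in_set_dropD)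
    have wc: "\<forall>a\<in>set w. evC a \<in> carrier G" using wv validC_carrier[OF Xs sg] by blast
    have cys: "foldr (\<otimes>) ys \<one> \<in> carrier G" using foldr_mult_carrier[OF is_group] ysX Xs by blast
    have h2c: "h2 \<in> carrier G" using Hc h2H by blast
    have V0: "vert G B w 0 = B" using cB by simp
    have V1: "vert G B w 1 = P2"
      using vert_Suc[OF cB wc, of 0] cB h2c by (simp add: w_def e2 evC_def P2eq)
    have Vk: "vert G B w (Suc k) = P1"
    proof -
      have "vert G B w (Suc k) = vert G B ((e2 # map Inl ys) @ (fp @ seg)) (Suc k)" by (simp add: w_def)
      also have "\<dots> = vert G B (e2 # map Inl ys) (length (e2 # map Inl ys))"
        using vert_app1[OF cB, of "e2 # map Inl ys" "fp @ seg" "Suc k"] wc by (simp add: w_def ylen)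
      also have "\<dots> = P1" using ysP cB h2c cys
        by (simp add: vert_def evC_def e2 evCw_Inl P2eq m_assoc)
      finally show ?thesis .
    qed
    define off where "off = Suc k + f"
    have Voff: "vert G B w (off + t) = vert G g2 W2 (j' + t)" if "t \<le> n2 - j'" for t
    proof -
      have "vert G B w (off + t) = vert G B ((e2 # map Inl ys @ fp) @ seg) (length (e2 # map Inl ys @ fp) + t)"
        by (simp add: w_def off_def ylen fplen)
      also have "\<dots> = vert G (B \<otimes> evCw G (e2 # map Inl ys @ fp)) seg t"
        using vert_app2[OF cB, of "e2 # map Inl ys @ fp" seg t] wc by (simp add: w_def)
      also have "B \<otimes> evCw G (e2 # map Inl ys @ fp) = a"
      proof -
        have "evCw G (map Inl ys @ fp) = foldr (\<otimes>) ys \<one> \<otimes> evCw G fp"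
          using evCw_append[OF is_group, of "map Inl ys" fp] ysX Xs fpc by (auto simp: evC_def evCw_Inl)
        then show ?thesis using ysP cB h2c cys evCw_carrier[OF is_group fpc] evfp
          by (simp add: evC_def e2 P2eq m_assoc) (metis m_assoc m_closed)
      qed
      finally show ?thesis using segv that by simp
    qed
    have Vend: "vert G B w (length w) = B"
      using Voff[of "n2 - j'"] jn wlen by (simp add: off_def B_def)
    have cyc: "is_cycle G X Lam H B w" using Vend cB wv by (simp add: is_cycle_def is_path_def)
    have wnX: "\<not> isH l (w ! Suc t)" if "t < k" for t
      using that by (simp add: w_def nth_append ylen isH_def)
    have wnf: "w ! Suc k = Inr (l, hh)" if "hh \<noteq> \<one>"
      using that by (simp add: w_def nth_append ylen fp_def)
    have wnseg: "w ! (off + t) = W2 ! (j' + t)" if "t < n2 - j'" for t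
    proof -
      have "w ! (off + t) = ((e2 # map Inl ys @ fp) @ seg) ! (length (e2 # map Inl ys @ fp) + t)"
        by (simp add: w_def off_def ylen fplen)
      also have "\<dots> = seg ! t" by (simp only: nth_append_length_plus)
      finally show ?thesis using that by (auto simp: seg_def W2_def nth_append n2_def)
    qed
    have pos: "i = 0 \<or> (hh \<noteq> \<one> \<and> i = Suc k) \<or> off \<le> i" if "isH l (w ! i)" for i
    proof (rule ccontr)
      assume "\<not> ?thesis"
      then obtain t where t: "i = Suc t" "t < k + f" "\<not> (hh \<noteq> \<one> \<and> i = Suc k)"
        by (cases i) (auto simp: off_def)
      show False
      proof (cases "t < k")
        case True then show ?thesis using wnX that t by simp
      next
        case False then show ?thesis using t by (auto simp: f_def split: if_splits)
      qed
    qed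
    have geo2': "is_geodesic G X Lam H g2 W2" using geo2 by (simp add: W2_def)
    have lenW2: "length W2 = Suc n2" by (simp add: W2_def n2_def)
    have comp01: "component l w 0 1"
      unfolding component_def
    proof
      have "isH l (w ! 0)" by (simp add: w_def e2 isH_def)
      then show "Hsub l w 0 1" using wlen by (auto simp: Hsub_def)
      show "\<not> (\<exists>i'' j''. i'' \<le> 0 \<and> 1 \<le> j'' \<and> (i'', j'') \<noteq> (0, 1) \<and> Hsub l w i'' j'')"
      proof
        assume "\<exists>i'' j''. i'' \<le> 0 \<and> 1 \<le> j'' \<and> (i'', j'') \<noteq> (0, 1) \<and> Hsub l w i'' j''"
        then obtain j'' where "2 \<le> j''" "Hsub l w 0 j''" by (metis Suc_1 Suc_leI le_antisym le_zero_eq order_le_less)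
        then have "isH l (w ! 1)" using Hsub_at[of l w 0 j'' 1] by simp
        then show False using wnX[of 0] kpos by simp
      qed
    qed
    have compf: "component l w (Suc k) (Suc (Suc k))" if hn: "hh \<noteq> \<one>"
      unfolding component_def
    proof
      have f1: "f = 1" using hn by (simp add: f_def)
      have "isH l (w ! Suc k)" using wnf[OF hn] by (simp add: isH_def)
      then show "Hsub l w (Suc k) (Suc (Suc k))" using wlen f1 by (auto simp: Hsub_def) (metis le_antisym less_Suc_eq_le)
      show "\<not> (\<exists>i'' j''. i'' \<le> Suc k \<and> Suc (Suc k) \<le> j'' \<and> (i'', j'') \<noteq> (Suc k, Suc (Suc k)) \<and> Hsub l w i'' j'')"
      proof
        assume "\<exists>i'' j''. i'' \<le> Suc k \<and> Suc (Suc k) \<le> j'' \<and> (i'', j'') \<noteq> (Suc k, Suc (Suc k)) \<and> Hsub l w i'' j''"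
        then obtain i'' j'' where ij'': "i'' \<le> Suc k" "Suc (Suc k) \<le> j''" "(i'', j'') \<noteq> (Suc k, Suc (Suc k))"
          "Hsub l w i'' j''" by blast
        show False
        proof (cases "i'' \<le> k")
          case True
          then have "isH l (w ! Suc (k - 1))" using Hsub_at[OF ij''(4), of k] ij'' kpos by simp
          then show False using wnX[of "k - 1"] kpos by simp
        next
          case False
          then have "i'' = Suc k" "Suc (Suc (Suc k)) \<le> j''" using ij'' by auto
          then have h: "isH l (w ! (off + 0))" "off + 0 < length w"
            using Hsub_at[OF ij''(4), of "Suc (Suc k)"] ij''(4) f1 by (auto simp: off_def Hsub_def)
          then have t0: "0 < n2 - j'" using wlen by (simp add: off_def)
          then have "isH l (W2 ! j')" using h wnseg[of 0] by simp
          then have "Hsub l W2 i' (Suc j')" using cc t0 lenW2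
            by (auto simp: component_def Hsub_def less_Suc_eq)
          then show False using cc unfolding component_def by (metis Suc_n_not_le_n le_SucI order_refl prod.inject)
        qed
      qed
    qed
    have cvw: "vert G B w m \<in> carrier G" for m using vert_carrier[OF cB wc] .
    have cvW2: "vert G g2 W2 m \<in> carrier G" for m using vert_carrier[OF g2 W2c] .
    have P2W: "P2 = vert G g2 W2 (Suc n2)" by (simp add: P2_def)
    have iso01: "isolated G H l B w 0 1"
      unfolding isolated_def
    proof (intro conjI comp01 notI)
      assume "\<exists>i j. (i, j) \<noteq> (0, 1) \<and> component l w i j \<and> connected_comps G H l B w 0 1 l B w i j"
      then obtain i j x' where ne: "(i, j) \<noteq> (0, 1)" and ci: "component l w i j" and x': "x' \<in> carrier G"
        and s1: "comp_verts G B w 0 1 \<subseteq> x' <# H l" and s2: "comp_verts G B w i j \<subseteq> x' <# H l"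
        unfolding connected_comps_def by blast
      have "vert G B w 1 \<in> comp_verts G B w 0 1"
        unfolding comp_verts_def by (intro CollectI exI[of _ "1::nat"]) simp
      then have P2x: "P2 \<in> x' <# H l" using s1 V1 by auto
      have Rm: "inv P2 \<otimes> vert G B w m \<in> H l" if "i \<le> m" "m \<le> j" for m
      proof -
        have "vert G B w m \<in> comp_verts G B w i j"
          unfolding comp_verts_def using that by (intro CollectI exI[of _ m]) simp
        then show ?thesis using coset_rel[OF Hl x' P2x] s2 by blast
      qed
      have hs: "i < j" "j \<le> length w" "isH l (w ! i)" using ci by (auto simp: component_def Hsub_def)
      from pos[OF hs(3)] show False
      proof (elim disjE)
        assume "i = 0" then show False using comp_same_start[OF comp01, of j] ci ne by auto
      next
        assume "hh \<noteq> \<one> \<and> i = Suc k"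
        then have "inv P2 \<otimes> P1 \<in> H l" using Rm[of i] hs Vk by simp
        then show False using rel_sym[OF Hl cP2 cP1] nr by blast
      next
        assume oi: "off \<le> i"
        define t where "t = i - off"
        have t: "i = off + t" "t < n2 - j'" using oi hs wlen by (auto simp: t_def off_def)
        have "inv P2 \<otimes> vert G g2 W2 (j' + t) \<in> H l" using Rm[of i] hs Voff[of t] t by simp
        then have "inv (vert G g2 W2 (j' + t)) \<otimes> vert G g2 W2 (Suc n2) \<in> H l"
          using rel_sym[OF Hl cP2 cvW2] P2W by simp
        moreover have "j' + t + 2 \<le> Suc n2" using t(2) by linarith
        ultimately show False using geo_coset[OF Xs sg l_in geo2', of "j' + t" "Suc n2"] lenW2 by simp
      qed
    qed
    have isof: "isolated G H l B w (Suc k) (Suc (Suc k))" if hn: "hh \<noteq> \<one>"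
      unfolding isolated_def
    proof (intro conjI compf[OF hn] notI)
      assume "\<exists>i j. (i, j) \<noteq> (Suc k, Suc (Suc k)) \<and> component l w i j \<and>
               connected_comps G H l B w (Suc k) (Suc (Suc k)) l B w i j"
      then obtain i j x' where ne: "(i, j) \<noteq> (Suc k, Suc (Suc k))" and ci: "component l w i j" and x': "x' \<in> carrier G"
        and s1: "comp_verts G B w (Suc k) (Suc (Suc k)) \<subseteq> x' <# H l" and s2: "comp_verts G B w i j \<subseteq> x' <# H l"
        unfolding connected_comps_def by blast
      have "vert G B w (Suc k) \<in> comp_verts G B w (Suc k) (Suc (Suc k))"
        unfolding comp_verts_def by (intro CollectI exI[of _ "Suc k"]) simp
      then have P1x': "P1 \<in> x' <# H l" using s1 Vk by auto
      have Rm: "inv P1 \<otimes> vert G B w m \<in> H l" if "i \<le> m" "m \<le> j" for m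
      proof -
        have "vert G B w m \<in> comp_verts G B w i j"
          unfolding comp_verts_def using that by (intro CollectI exI[of _ m]) simp
        then show ?thesis using coset_rel[OF Hl x' P1x'] s2 by blast
      qed
      have hs: "i < j" "j \<le> length w" "isH l (w ! i)" using ci by (auto simp: component_def Hsub_def)
      from pos[OF hs(3)] show False
      proof (elim disjE)
        assume "i = 0"
        then have "inv P1 \<otimes> P2 \<in> H l" using Rm[of 1] hs V1 by simp
        then show False using nr by blast
      next
        assume "hh \<noteq> \<one> \<and> i = Suc k"
        then show False using comp_same_start[OF compf[OF hn], of j] ci ne by auto
      next
        assume oi: "off \<le> i"
        define t where "t = i - off"
        have t: "i = off + t" "t < n2 - j'" using oi hs wlen by (auto simp: t_def off_def)
        have "inv P1 \<otimes> vert G g2 W2 (j' + Suc t) \<in> H l"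
          using Rm[of "Suc i"] hs Voff[of "Suc t"] t by simp
        moreover have "inv P1 \<otimes> vert G g2 W2 i' \<in> H l" using cP[of i'] ij by simp
        ultimately have "inv (vert G g2 W2 i') \<otimes> vert G g2 W2 (j' + Suc t) \<in> H l"
          using rel_trans[OF Hl cP1 cvW2 cvW2] by blast
        moreover have "i' + 2 \<le> j' + Suc t" "j' + Suc t \<le> length W2" using t(2) ij lenW2 by linarith+
        ultimately show False using geo_coset[OF Xs sg l_in geo2', of i' "j' + Suc t"] by blast
      qed
    qed
    have bigB: "real (dX G X B P2) \<ge> 2 * L * (s + 1)"
      using big2 by (simp add: B_def P2_def W2_def n2_def)
    have wlen_r: "real (length w) \<le> 2 * real k + 2 * real f" using wle by linarith
    show ?thesis
    proof (cases "hh = \<one>")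
      case True
      then have f0: "f = 0" by (simp add: f_def)
      have "(\<Sum>(i, j)\<in>{(0::nat, 1::nat)}. real (dX G X (vert G B w i) (vert G B w j))) \<le> L * real (length w)"
        using L_prop[rule_format, of B w l "{(0, 1)}"] cyc l_in iso01 by auto
      then have "real (dX G X B P2) \<le> L * real (length w)" using V0 V1 by simp
      also have "\<dots> \<le> L * (2 * real k)" using wlen_r f0 L_pos by (intro mult_left_mono) auto
      also have "\<dots> \<le> L * (2 * s)" using ks L_pos by (intro mult_left_mono) auto
      finally show ?thesis using bigB L_pos by (simp add: algebra_simps)
    next
      case hn: False
      then have f1: "f = 1" by (simp add: f_def)
      have Vf: "vert G B w (Suc (Suc k)) = a" using Voff[of 0] f1 by (simp add: off_def a_def)
      have ne: "(0::nat, 1::nat) \<noteq> (Suc k, Suc (Suc k))" by simp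
      have "(\<Sum>(i, j)\<in>{(0::nat, 1::nat), (Suc k, Suc (Suc k))}. real (dX G X (vert G B w i) (vert G B w j)))
              \<le> L * real (length w)"
        using L_prop[rule_format, of B w l "{(0, 1), (Suc k, Suc (Suc k))}"] cyc l_in iso01 isof[OF hn] by auto
      then have "real (dX G X B P2) + real (dX G X P1 a) \<le> L * real (length w)"
        using V0 V1 Vk Vf ne by simp
      also have "\<dots> \<le> L * (2 * real k + 2)" using wlen_r f1 L_pos by (intro mult_left_mono) auto
      also have "\<dots> \<le> L * (2 * s + 2)" using ks L_pos by (intro mult_left_mono) auto
      finally have "dX G X P1 a = 0" using bigB L_pos by (simp add: algebra_simps)
      then have "P1 = a" using dX_zero[OF is_group Xs sym gen cP1 ca] by simp
      then have "hh = \<one>" using cP1 by (simp add: hh_def)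
      then show ?thesis using hn by simp
    qed
  qed
qed

end

theorem lemma3p1:
  fixes G :: "('a, 'b) monoid_scheme" and X :: "'a set" and Lam :: "'l set"
    and H :: "'l \<Rightarrow> 'a set" and L s eps :: real
    and g1 g2 :: 'a and q1 q2 :: "('a + ('l \<times> 'a)) list" and e1 e2 :: "'a + ('l \<times> 'a)"
    and l :: 'l
  assumes grp: "group G"
    and X_fin: "finite X" and X_sub: "X \<subseteq> carrier G"
    and X_sym: "\<forall>x\<in>X. inv\<^bsub>G\<^esub> x \<in> X"
    and X_gen: "generate G X = carrier G"
    and Lam_fin: "finite Lam"
    and subgr: "\<forall>l\<in>Lam. subgroup (H l) G"
    and relhyp: "rel_hyperbolic G X Lam H"
    and L_pos: "L > 0"
    and L_prop: "\<forall>g w l' S. is_cycle G X Lam H g w \<and> l' \<in> Lam \<and>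
                   S \<subseteq> {(i, j). isolated G H l' g w i j} \<longrightarrow>
                   (\<Sum>(i, j)\<in>S. real (dX G X (vert G g w i) (vert G g w j))) \<le> L * real (length w)"
    and s_nonneg: "s \<ge> 0"
    and eps_nonneg: "eps \<ge> 0"
    and eps_prop: "\<forall>h1 w1 h2 w2 l' i j.
                   is_geodesic G X Lam H h1 w1 \<and> is_geodesic G X Lam H h2 w2 \<and>
                   real (dX G X (vert G h1 w1 0) (vert G h2 w2 0)) \<le> s \<and>
                   real (dX G X (vert G h1 w1 (length w1)) (vert G h2 w2 (length w2))) \<le> s \<and>
                   component l' w1 i j \<and> real (dX G X (vert G h1 w1 i) (vert G h1 w1 j)) \<ge> eps \<longrightarrow>
                   (\<exists>l'' i' j'. connected_comps G H l' h1 w1 i j l'' h2 w2 i' j')"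
    and geo1: "is_geodesic G X Lam H g1 (q1 @ [e1])"
    and geo2: "is_geodesic G X Lam H g2 (q2 @ [e2])"
    and start_close: "real (dX G X (vert G g1 (q1 @ [e1]) 0) (vert G g2 (q2 @ [e2]) 0)) \<le> s"
    and end_close: "real (dX G X (vert G g1 (q1 @ [e1]) (Suc (length q1)))
                                 (vert G g2 (q2 @ [e2]) (Suc (length q2)))) \<le> s"
    and l_in: "l \<in> Lam"
    and comp1: "component l (q1 @ [e1]) (length q1) (Suc (length q1))"
    and comp2: "component l (q2 @ [e2]) (length q2) (Suc (length q2))"
    and big1: "real (dX G X (vert G g1 (q1 @ [e1]) (length q1)) (vert G g1 (q1 @ [e1]) (Suc (length q1))))
                 \<ge> max eps (2 * L * (s + 1))"
    and big2: "real (dX G X (vert G g2 (q2 @ [e2]) (length q2)) (vert G g2 (q2 @ [e2]) (Suc (length q2))))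
                 \<ge> max eps (2 * L * (s + 1))"
  shows "connected_comps G H l g1 (q1 @ [e1]) (length q1) (Suc (length q1))
                         l g2 (q2 @ [e2]) (length q2) (Suc (length q2))"
    using group.main[OF grp X_sub X_sym X_gen subgr L_pos L_prop s_nonneg eps_prop geo1 geo2
      start_close end_close l_in comp1 comp2 big1 big2] .

end
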